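(* Let $G$ be a countable self-similar group over $X$ with $\mu((X^\omega)_{G\text{-reg}})=1$, and fix a strictly $G$-regular point $w_0\in X^\omega$. If $\eta\in\mathbb{C}\langle G,X\rangle$ satisfies $\pi_{w_0}(\eta)=0$, then $\psi(\eta)=0$. Consequently the assignment $\psi'(\pi_{w_0}(f)):=\psi(f)$ for $f\in\langle G,X\rangle$ extends to a well-defined linear functional $\psi'$ on $\pi_{w_0}(\mathbb{C}\langle G,X\rangle)$.
   Context: $X$ is a finite set with $|X|\ge2$, $X^*$ the finite words, $X^\omega$ the right-infinite words with the product topology, $\mu$ the uniform Bernoulli measure on $X^\omega$. A self-similar group over $X$ is a subgroup $G\subset\mathrm{Homeo}(X^\omega)$ such that for all $g\in G$, $x\in X$ there are $g(x)\in X$, $g|_x\in G$ with $g(xw)=g(x)g|_x(w)$ for all $w$. $\mathcal{O}_{G_{\max}}$ is the universal unital C$^*$-algebra generated by unitaries $g\in G$ (respecting relations of $G$) and $S_x$ ($x\in X$) with $S_x^*S_x=1$, $\sum_yS_yS_y^*=1$, $gS_x=S_{g(x)}g|_x$; $S_u=S_{x_1}\cdots S_{x_n}$ for $u=x_1\cdots x_n$. $\langle G,X\rangle=\{S_ugS_v^*:u,v\in X^*,g\in G\}$, whose elements are also regarded as partial homeomorphisms of $X^\omega$ ($S_u:w\mapsto uw$, $S_v^*$ its partial inverse on $vX^\omega$). $\mathbb{C}\langle G,X\rangle=\mathrm{span}\,\langle G,X\rangle\subset\mathcal{O}_{G_{\max}}$. The linear functional $\psi$ on $\mathbb{C}\langle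 G,X\rangle$ is $\psi(S_ugS_v^* )=\delta_{u,v}|X|^{-|u|}\mu(\{w:g(w)=w\})$ (equivalently $\psi(f)=\mu(\mathrm{Fix}(f))$ for $f\in\langle G,X\rangle$). For $w\in X^\omega$, $\pi_w$ is the representation of $\mathcal{O}_{G_{\max}}$ on $\ell^2$ of the orbit $\{f(w):f\in\langle G,X\rangle,w\in\mathrm{Dom} f\}$ given by $\pi_w(S_x)\delta_{w_1}=\delta_{xw_1}$, $\pi_w(g)\delta_{w_1}=\delta_{g(w_1)}$. For $f\in\langle G,X\rangle$, $w$ is $f$-regular if $f$ is undefined at $w$, or $f(w)\ne w$, or $w$ has an open neighborhood of fixed points of $f$; $w$ is strictly $G$-regular if it is $f$-regular for all $f\in\langle G,X\rangle$; $w$ is $G$-regular if it is $g$-regular for all $g\in G$, and $(X^\omega)_{G\text{-reg}}$ is the set of $G$-regular points. *)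

theory Defs
  imports "HOL-Analysis.Analysis" "HOL-Probability.Probability"
begin

text \<open>The alphabet X is the finite type 'x (X = UNIV); X^* = 'x list;
  X^omega = nat => 'x (right-infinite words).\<close>

type_synonym 'x infword = "nat \<Rightarrow> 'x"

definition Xomega_top :: "'x infword topology" where
  "Xomega_top = product_topology (\<lambda>_::nat. discrete_topology (UNIV::'x set)) UNIV"

definition bernoulli_mu :: "'x::finite infword measure" where
  "bernoulli_mu = (\<Pi>\<^sub>M i\<in>(UNIV::nat set). measure_pmf (pmf_of_set (UNIV::'x set)))"

definition prep :: "'x list \<Rightarrow> 'x infword \<Rightarrow> 'x infword" where
  "prep u w = (\<lambda>i. if i < length u then u ! i else w (i - length u))"

definition dropw :: "nat \<Rightarrow> 'x infword \<Rightarrow> 'x infword" where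
  "dropw n w = (\<lambda>i. w (i + n))"

definition has_prefix :: "'x list \<Rightarrow> 'x infword \<Rightarrow> bool" where
  "has_prefix v w \<longleftrightarrow> (\<forall>i<length v. w i = v ! i)"

definition self_similar_group :: "('x infword \<Rightarrow> 'x infword) set \<Rightarrow> bool" where
  "self_similar_group G \<longleftrightarrow>
     (\<forall>g\<in>G. homeomorphic_map Xomega_top Xomega_top g) \<and>
     id \<in> G \<and> (\<forall>g\<in>G. \<forall>h\<in>G. g \<circ> h \<in> G) \<and> (\<forall>g\<in>G. inv g \<in> G) \<and>
     (\<forall>g\<in>G. \<forall>x. \<exists>y. \<exists>h\<in>G. \<forall>w. g (prep [x] w) = prep [y] (h w))"

text \<open>Elements S_u g S_v^* of <G,X>, encoded as triples (u,g,v), acting as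
  partial homeomorphisms: defined on vX^omega, v w' \<mapsto> u g(w').\<close>
type_synonym 'x gen = "'x list \<times> ('x infword \<Rightarrow> 'x infword) \<times> 'x list"

definition GX :: "('x infword \<Rightarrow> 'x infword) set \<Rightarrow> 'x gen set" where
  "GX G = {(u, g, v). g \<in> G}"

definition pact :: "'x gen \<Rightarrow> 'x infword \<Rightarrow> 'x infword option" where
  "pact f w = (case f of (u, g, v) \<Rightarrow>
     if has_prefix v w then Some (prep u (g (dropw (length v) w))) else None)"

definition f_regular :: "'x gen \<Rightarrow> 'x infword \<Rightarrow> bool" where
  "f_regular f w \<longleftrightarrow> pact f w = None \<or> pact f w \<noteq> Some w \<or>
     (\<exists>U. openin Xomega_top U \<and> w \<in> U \<and> (\<forall>v\<in>U. pact f v = Some v))"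

definition strictly_G_regular :: "('x infword \<Rightarrow> 'x infword) set \<Rightarrow> 'x infword \<Rightarrow> bool" where
  "strictly_G_regular G w \<longleftrightarrow> (\<forall>f\<in>GX G. f_regular f w)"

definition G_regular :: "('x infword \<Rightarrow> 'x infword) set \<Rightarrow> 'x infword \<Rightarrow> bool" where
  "G_regular G w \<longleftrightarrow> (\<forall>g\<in>G. f_regular ([], g, []) w)"

definition orbit :: "('x infword \<Rightarrow> 'x infword) set \<Rightarrow> 'x infword \<Rightarrow> 'x infword set" where
  "orbit G w = {w1. \<exists>f\<in>GX G. pact f w = Some w1}"

text \<open>Elements of C<G,X> are given as finite linear combinations sum c_i f_i,
  represented by lists of (coefficient, generator) pairs with generators in <G,X>.\<close>
definition CGX :: "('x infword \<Rightarrow> 'x infword) set \<Rightarrow> (complex \<times> 'x gen) list set" where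
  "CGX G = {eta. \<forall>(c, f)\<in>set eta. f \<in> GX G}"

text \<open>The operator pi_w(eta) on l^2(orbit of w), given by its values on the
  standard basis: pi_rep G w eta w1 is the vector pi_w(eta) delta_{w1}
  (for w1 in the orbit), as a function of the orbit point w2.
  pi_w(S_u g S_v^*) delta_{w1} = delta_{f(w1)} if w1 in vX^omega, else 0.\<close>
definition pi_rep :: "('x infword \<Rightarrow> 'x infword) set \<Rightarrow> 'x infword \<Rightarrow> (complex \<times> 'x gen) list
    \<Rightarrow> 'x infword \<Rightarrow> 'x infword \<Rightarrow> complex" where
  "pi_rep G w eta w1 w2 =
     (if w1 \<in> orbit G w \<and> w2 \<in> orbit G w
      then (\<Sum>(c, f)\<leftarrow>eta. if pact f w1 = Some w2 then c else 0) else 0)"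

definition psi_gen :: "'x::finite gen \<Rightarrow> complex" where
  "psi_gen f = (case f of (u, g, v) \<Rightarrow>
     if u = v then complex_of_real (real CARD('x) powi (- int (length u))
                     * measure bernoulli_mu {w. g w = w}) else 0)"

definition psi :: "(complex \<times> 'x::finite gen) list \<Rightarrow> complex" where
  "psi eta = (\<Sum>(c, f)\<leftarrow>eta. c * psi_gen f)"

end

theory Submission
  imports Defs
begin


abbreviation M0 :: "'x::finite measure" where "M0 \<equiv> measure_pmf (pmf_of_set UNIV)"

lemma seqsp: "sequence_space (M0::'x::finite measure)"
  by (simp add: sequence_space_def product_prob_space_def product_prob_space_axioms_def
     product_sigma_finite_def prob_space_measure_pmf prob_space_imp_sigma_finite)

lemma space_mu[simp]: "space (bernoulli_mu :: 'x::finite infword measure) = UNIV"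
  by (simp add: bernoulli_mu_def space_PiM)

lemma iter: "distr (M0 \<Otimes>\<^sub>M bernoulli_mu) bernoulli_mu (\<lambda>(s, \<omega>). case_nat s \<omega>) = (bernoulli_mu :: 'x::finite infword measure)"
  unfolding bernoulli_mu_def using sequence_space.PiM_iter[OF seqsp] .

lemma prob_mu: "prob_space (bernoulli_mu :: 'x::finite infword measure)"
  unfolding bernoulli_mu_def by (rule prob_space_PiM) (simp add: prob_space_measure_pmf)

lemma comp_meas: "(\<lambda>w. w i) \<in> measurable (bernoulli_mu :: 'x::finite infword measure) M0"
  unfolding bernoulli_mu_def by (rule measurable_component_singleton) simp

lemma dropw_meas: "dropw n \<in> measurable (bernoulli_mu :: 'x::finite infword measure) bernoulli_mu"
  unfolding dropw_def
  apply (subst (2) bernoulli_mu_def)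
  apply (rule measurable_PiM_single')
  using comp_meas apply blast
  apply (simp add: space_PiM)
  done

lemma single_meas: "{w. w i = x} \<in> sets (bernoulli_mu :: 'x::finite infword measure)"
proof -
  have "{w. w i = x} = (\<lambda>w. w i) -` {x} \<inter> space bernoulli_mu" by auto
  also have "\<dots> \<in> sets bernoulli_mu" by (rule measurable_sets[OF comp_meas]) simp
  finally show ?thesis .
qed

lemma cons_meas:
  assumes "A \<in> sets (bernoulli_mu :: 'x::finite infword measure)"
  shows "{w. w 0 = x \<and> dropw 1 w \<in> A} \<in> sets bernoulli_mu"
proof -
  have "{w. w 0 = x \<and> dropw 1 w \<in> A} = {w. w 0 = x} \<inter> (dropw 1 -` A \<inter> space bernoulli_mu)" by auto
  also have "\<dots> \<in> sets bernoulli_mu"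
    using single_meas measurable_sets[OF dropw_meas assms] by blast
  finally show ?thesis .
qed

lemma drop_meas_set:
  assumes "A \<in> sets (bernoulli_mu :: 'x::finite infword measure)"
  shows "{w. dropw n w \<in> A} \<in> sets bernoulli_mu"
  using measurable_sets[OF dropw_meas assms] by (simp add: vimage_def)

lemma cons_emeasure:
  assumes A: "A \<in> sets (bernoulli_mu :: 'x::finite infword measure)"
  shows "emeasure bernoulli_mu {w. w 0 = x \<and> dropw 1 w \<in> A} = ennreal (1 / real CARD('x)) * emeasure bernoulli_mu A"
proof -
  let ?f = "\<lambda>(s::'x, \<omega>::'x infword). case_nat s \<omega>"
  have fm: "?f \<in> measurable (M0 \<Otimes>\<^sub>M bernoulli_mu) bernoulli_mu"
    unfolding split_beta' bernoulli_mu_def by (intro measurable_case_nat' measurable_fst measurable_snd)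
  have pre: "?f -` {w. w 0 = x \<and> dropw 1 w \<in> A} \<inter> space (M0 \<Otimes>\<^sub>M bernoulli_mu) = {x} \<times> A"
    by (auto simp: space_pair_measure dropw_def)
  have "emeasure bernoulli_mu {w. w 0 = x \<and> dropw 1 w \<in> A}
      = emeasure (distr (M0 \<Otimes>\<^sub>M bernoulli_mu) bernoulli_mu ?f) {w. w 0 = x \<and> dropw 1 w \<in> A}"
    by (simp only: iter)
  also have "\<dots> = emeasure (M0 \<Otimes>\<^sub>M bernoulli_mu) ({x} \<times> A)"
    by (subst emeasure_distr[OF fm cons_meas[OF A]], subst pre, rule refl)
  also have "\<dots> = emeasure M0 {x} * emeasure bernoulli_mu A"
    by (rule sigma_finite_measure.emeasure_pair_measure_Times[OF prob_space_imp_sigma_finite[OF prob_mu]]) (simp_all add: A)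
  also have "emeasure (M0::'x measure) {x} = ennreal (1 / real CARD('x))"
    by (simp add: emeasure_pmf_single)
  finally show ?thesis .
qed

lemma shift_emeasure:
  assumes A: "A \<in> sets (bernoulli_mu :: 'x::finite infword measure)"
  shows "emeasure bernoulli_mu {w. dropw 1 w \<in> A} = emeasure bernoulli_mu A"
proof -
  let ?f = "\<lambda>(s::'x, \<omega>::'x infword). case_nat s \<omega>"
  have fm: "?f \<in> measurable (M0 \<Otimes>\<^sub>M bernoulli_mu) bernoulli_mu"
    unfolding split_beta' bernoulli_mu_def by (intro measurable_case_nat' measurable_fst measurable_snd)
  have pre: "?f -` {w. dropw 1 w \<in> A} \<inter> space (M0 \<Otimes>\<^sub>M bernoulli_mu) = UNIV \<times> A"
    by (auto simp: space_pair_measure dropw_def)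
  have "emeasure bernoulli_mu {w. dropw 1 w \<in> A}
      = emeasure (distr (M0 \<Otimes>\<^sub>M bernoulli_mu) bernoulli_mu ?f) {w. dropw 1 w \<in> A}"
    by (simp only: iter)
  also have "\<dots> = emeasure ((M0::'x measure) \<Otimes>\<^sub>M bernoulli_mu) (UNIV \<times> A)"
    by (subst emeasure_distr[OF fm drop_meas_set[where n=1, OF A]], subst pre, rule refl)
  also have "\<dots> = emeasure (M0::'x measure) UNIV * emeasure bernoulli_mu A"
    by (rule sigma_finite_measure.emeasure_pair_measure_Times[OF prob_space_imp_sigma_finite[OF prob_mu]]) (simp_all add: A)
  also have "emeasure (M0::'x measure) UNIV = 1"
    using prob_space.emeasure_space_1[OF prob_space_measure_pmf] by simp
  finally show ?thesis by simp
qed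



definition agree :: "nat \<Rightarrow> 'x infword \<Rightarrow> 'x infword \<Rightarrow> bool" where
  "agree n x y \<longleftrightarrow> (\<forall>i<n. x i = y i)"

definition pre :: "nat \<Rightarrow> 'x infword \<Rightarrow> 'x list" where
  "pre n w = map w [0..<n]"

lemma length_pre[simp]: "length (pre n w) = n" by (simp add: pre_def)

lemma prep_nil[simp]: "prep [] w = w" by (simp add: prep_def)
lemma dropw_0[simp]: "dropw 0 w = w" by (simp add: dropw_def)

lemma prep_append: "prep (a @ b) w = prep a (prep b w)"
  by (auto simp: prep_def nth_append fun_eq_iff)

lemma dropw_prep[simp]: "dropw (length u) (prep u w) = w"
  by (simp add: dropw_def prep_def)

lemma dropw_dropw: "dropw n (dropw m w) = dropw (n + m) w"
  by (simp add: dropw_def add.assoc)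

lemma has_prefix_prep[simp]: "has_prefix u (prep u w)"
  by (simp add: has_prefix_def prep_def)

lemma prep_dropw: "has_prefix v w \<Longrightarrow> prep v (dropw (length v) w) = w"
  by (auto simp: has_prefix_def prep_def dropw_def fun_eq_iff)

lemma has_prefix_pre: "has_prefix (pre n w) x \<longleftrightarrow> agree n x w"
  by (simp add: has_prefix_def agree_def pre_def)

lemma prep_pre: "prep (pre n w) (dropw n w) = w"
  using prep_dropw[of "pre n w" w] by (simp add: has_prefix_pre agree_def)

lemma agree_prep: "agree (length u) (prep u x) (prep u y)"
  by (simp add: agree_def prep_def)

lemma has_prefix_append: "has_prefix (a @ b) w \<Longrightarrow> has_prefix a w"
  by (auto simp: has_prefix_def nth_append)

lemma prep_eq_same: "length a = length b \<Longrightarrow> prep a w = prep b w' \<Longrightarrow> a = b \<and> w = w'"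
proof -
  assume l: "length a = length b" and e: "prep a w = prep b w'"
  have "a = b"
  proof (rule nth_equalityI)
    fix i assume "i < length a"
    then show "a ! i = b ! i" using fun_cong[OF e, of i] l by (simp add: prep_def)
  qed (use l in simp)
  moreover have "w = w'"
    using arg_cong[OF e, of "dropw (length a)"] l by (metis dropw_prep)
  ultimately show ?thesis by simp
qed

lemma prep_eq_less:
  assumes "length a < length b" "prep a w = prep b w'"
  shows "b = a @ drop (length a) b \<and> w = prep (drop (length a) b) w'"
proof -
  have "prep a w = prep (take (length a) b) (prep (drop (length a) b) w')"
    using assms(2) by (simp add: prep_append[symmetric])
  then have "a = take (length a) b \<and> w = prep (drop (length a) b) w'"
    using prep_eq_same[of a "take (length a) b"] assms(1) by simp
  then show ?thesis by (metis append_take_drop_id)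
qed

lemma has_prefix_prep_append: "has_prefix v (prep (v @ q) y)"
  by (simp add: prep_append)

lemma has_prefix_Cons: "has_prefix (x # u) w \<longleftrightarrow> w 0 = x \<and> has_prefix u (dropw 1 w)"
  by (auto simp: has_prefix_def dropw_def nth_Cons split: nat.splits)

lemma has_prefix_same_len: "has_prefix u w \<Longrightarrow> has_prefix v w \<Longrightarrow> length u = length v \<Longrightarrow> u = v"
  by (auto simp: has_prefix_def intro: nth_equalityI)

lemma has_prefix_agree: "has_prefix v w \<Longrightarrow> agree n x w \<Longrightarrow> length v \<le> n \<Longrightarrow> has_prefix v x"
  by (auto simp: has_prefix_def agree_def)

lemma agree_mono: "agree n x y \<Longrightarrow> m \<le> n \<Longrightarrow> agree m x y"
  by (auto simp: agree_def)

lemma agree_sym: "agree n x y \<Longrightarrow> agree n y x" by (auto simp: agree_def)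
lemma agree_trans: "agree n x y \<Longrightarrow> agree n y z \<Longrightarrow> agree n x z" by (auto simp: agree_def)
lemma agree_refl[simp]: "agree n x x" by (auto simp: agree_def)

lemma agree_dropw: "agree n x w \<Longrightarrow> agree (n - m) (dropw m x) (dropw m w)"
  by (auto simp: agree_def dropw_def)

lemma agree_prep_iff: "agree (length u + n) (prep u x) (prep u y) \<longleftrightarrow> agree n x y"
  by (auto simp: agree_def prep_def)

lemma ss_prefix:
  assumes ss: "self_similar_group G"
  shows "g \<in> G \<Longrightarrow> \<exists>p' h. length p' = length p \<and> h \<in> G \<and> (\<forall>y. g (prep p y) = prep p' (h y))"
proof (induction p arbitrary: g)
  case Nil
  then show ?case by (intro exI[of _ "[]"] exI[of _ g]) simp
next
  case (Cons x p)
  from ss Cons.prems obtain y h1 where h1: "h1 \<in> G" "\<forall>w. g (prep [x] w) = prep [y] (h1 w)"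
    unfolding self_similar_group_def by blast
  from Cons.IH[OF h1(1)] obtain p'' h2 where h2: "length p'' = length p" "h2 \<in> G"
    "\<forall>z. h1 (prep p z) = prep p'' (h2 z)" by blast
  have "\<forall>z. g (prep (x # p) z) = prep (y # p'') (h2 z)"
  proof
    fix z
    have "g (prep (x # p) z) = g (prep [x] (prep p z))" using prep_append[of "[x]" p z] by simp
    also have "\<dots> = prep [y] (prep p'' (h2 z))" using h1(2) h2(3) by simp
    also have "\<dots> = prep (y # p'') (h2 z)" using prep_append[of "[y]" p'' "h2 z"] by simp
    finally show "g (prep (x # p) z) = prep (y # p'') (h2 z)" .
  qed
  then show ?case using h2 by (intro exI[of _ "y # p''"] exI[of _ h2]) simp
qed

lemma ss_agree:
  assumes ss: "self_similar_group G" and g: "g \<in> G" and a: "agree n x y"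
  shows "agree n (g x) (g y)"
proof -
  obtain p' h where ph: "length p' = n" "h \<in> G" "\<forall>z. g (prep (pre n x) z) = prep p' (h z)"
    using ss_prefix[OF ss g, of "pre n x"] by auto
  have "pre n y = pre n x" using a by (auto simp: pre_def agree_def)
  then have "g x = prep p' (h (dropw n x))" "g y = prep p' (h (dropw n y))"
    using ph(3) prep_pre[of n x] prep_pre[of n y] by metis+
  then show ?thesis using agree_prep[of p'] ph(1) by simp
qed



definition fixp :: "'x gen \<Rightarrow> 'x infword \<Rightarrow> bool" where
  "fixp f x \<longleftrightarrow> pact f x = Some x"

definition intc :: "('x infword \<Rightarrow> bool) \<Rightarrow> 'x infword set" where
  "intc P = {w. \<exists>n. \<forall>x. agree n x w \<longrightarrow> P x}"

lemma pact_simp: "pact (u, g, v) w = (if has_prefix v w then Some (prep u (g (dropw (length v) w))) else None)"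
  by (simp add: pact_def)

lemma topspace_X[simp]: "topspace Xomega_top = UNIV"
  by (simp add: Xomega_top_def)

lemma open_agree:
  assumes "openin Xomega_top U" "w \<in> U"
  shows "\<exists>n. \<forall>x. agree n x w \<longrightarrow> x \<in> U"
proof -
  obtain V where V: "finite {i. V i \<noteq> UNIV}" "w \<in> Pi\<^sub>E UNIV V" "Pi\<^sub>E UNIV V \<subseteq> U"
    using assms unfolding Xomega_top_def openin_product_topology_alt by auto
  obtain k where k: "{i. V i \<noteq> UNIV} \<subseteq> {..<k}" using V(1) finite_nat_bounded by blast
  show ?thesis
  proof (intro exI allI impI)
    fix x assume a: "agree k x w"
    have "x \<in> Pi\<^sub>E UNIV V"
    proof -
      have "x i \<in> V i" for i
      proof (cases "i < k")
        case True then show ?thesis using a V(2) by (auto simp: agree_def PiE_iff)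
      next
        case False then show ?thesis using k by auto
      qed
      then show ?thesis by (auto simp: PiE_iff)
    qed
    then show "x \<in> U" using V(3) by auto
  qed
qed

lemma sreg_use:
  assumes "strictly_G_regular G w0" "f \<in> GX G" "fixp f w0"
  shows "\<exists>n. \<forall>x. agree n x w0 \<longrightarrow> fixp f x"
proof -
  have "f_regular f w0" using assms(1,2) by (simp add: strictly_G_regular_def)
  then obtain U where U: "openin Xomega_top U" "w0 \<in> U" "\<forall>v\<in>U. pact f v = Some v"
    using assms(3) by (auto simp: f_regular_def fixp_def)
  then show ?thesis using open_agree[OF U(1,2)] by (auto simp: fixp_def)
qed

lemma GX_mem[simp]: "(u, g, v) \<in> GX G \<longleftrightarrow> g \<in> G" by (simp add: GX_def)

lemma transfer:
  assumes ss: "self_similar_group G" and sreg: "strictly_G_regular G w0" and g: "g \<in> G"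
    and len: "length v \<le> length q" and fx: "fixp (u, g, v) (prep q w0)"
  shows "\<exists>K. \<forall>x. agree K x (prep q w0) \<longrightarrow> fixp (u, g, v) x"
proof -
  have hp: "has_prefix v (prep q w0)" using fx by (auto simp: fixp_def pact_simp split: if_splits)
  have "take (length v) q = v"
    using hp len by (auto simp: has_prefix_def prep_def intro!: nth_equalityI)
  then obtain q2 where q: "q = v @ q2" by (metis append_take_drop_id)
  obtain p' h where ph: "length p' = length q2" "h \<in> G" "\<forall>y. g (prep q2 y) = prep p' (h y)"
    using ss_prefix[OF ss g, of q2] by blast
  define a where "a = u @ p'"
  have pq: "pact (u, g, v) (prep q y) = Some (prep a (h y))" for y
  proof -
    have "has_prefix v (prep q y)" using q has_prefix_prep_append by blast
    moreover have "dropw (length v) (prep q y) = prep q2 y" using q by (simp add: prep_append)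
    ultimately show ?thesis using ph(3) by (simp add: pact_simp a_def prep_append)
  qed
  have fix0: "prep a (h w0) = prep q w0" using fx pq[of w0] by (simp add: fixp_def)
  have suff: "\<exists>k. \<forall>y. agree k y w0 \<longrightarrow> prep a (h y) = prep q y"
  proof (cases "length a = length q")
    case True
    then have "h w0 = w0" using prep_eq_same[OF True fix0] by simp
    then have "fixp ([], h, []) w0" by (simp add: fixp_def pact_simp has_prefix_def)
    then obtain n where n: "\<forall>x. agree n x w0 \<longrightarrow> fixp ([], h, []) x"
      using sreg_use[OF sreg _] ph(2) by (metis GX_mem)
    have "a = q" using prep_eq_same[OF True fix0] by simp
    then show ?thesis using n by (intro exI[of _ n]) (auto simp: fixp_def pact_simp has_prefix_def)
  next
    case False
    show ?thesis
    proof (cases "length a < length q")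
      case True
      define e where "e = drop (length a) q"
      have qe: "q = a @ e" and he: "h w0 = prep e w0"
        using prep_eq_less[OF True fix0] by (auto simp: e_def)
      define z where "z = pre (length e) w0"
      obtain e' h' where eh: "length e' = length z" "h' \<in> G" "\<forall>y. h (prep z y) = prep e' (h' y)"
        using ss_prefix[OF ss ph(2), of z] by blast
      have w0z: "w0 = prep z (dropw (length e) w0)" using prep_pre[of "length e" w0] by (simp add: z_def)
      have "prep e' (h' (dropw (length e) w0)) = prep e w0"
        using he eh(3) w0z by metis
      then have ee: "e' = e" "h' (dropw (length e) w0) = w0"
        using prep_eq_same[of e' e] eh(1) by (auto simp: z_def)
      have hz: "has_prefix z w0" by (simp add: z_def has_prefix_pre)
      have "fixp ([], h', z) w0" using hz ee by (simp add: fixp_def pact_simp z_def)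
      then obtain n where n: "\<forall>x. agree n x w0 \<longrightarrow> fixp ([], h', z) x"
        using sreg_use[OF sreg _] eh(2) by (metis GX_mem)
      show ?thesis
      proof (intro exI[of _ n] allI impI)
        fix y assume "agree n y w0"
        then have "fixp ([], h', z) y" using n by blast
        then have yz: "has_prefix z y" and hy: "h' (dropw (length e) y) = y"
          by (auto simp: fixp_def pact_simp z_def split: if_splits)
        have "y = prep z (dropw (length e) y)" using prep_dropw[OF yz] by (simp add: z_def)
        then have "h y = prep e (h' (dropw (length e) y))" using eh(3) ee(1) by metis
        then have "h y = prep e y" using hy by simp
        then show "prep a (h y) = prep q y" using qe by (simp add: prep_append)
      qed
    next
      case False2: False
      then have lt: "length q < length a" using False by simp
      define e where "e = drop (length q) a"
      have qe: "a = q @ e" and he: "w0 = prep e (h w0)"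
        using prep_eq_less[OF lt fix0[symmetric]] by (auto simp: e_def)
      have "fixp (e, h, []) w0" using he by (simp add: fixp_def pact_simp has_prefix_def)
      then obtain n where n: "\<forall>x. agree n x w0 \<longrightarrow> fixp (e, h, []) x"
        using sreg_use[OF sreg _] ph(2) by (metis GX_mem)
      show ?thesis
      proof (intro exI[of _ n] allI impI)
        fix y assume "agree n y w0"
        then have "prep e (h y) = y" using n by (auto simp: fixp_def pact_simp has_prefix_def)
        then show "prep a (h y) = prep q y" using qe by (simp add: prep_append)
      qed
    qed
  qed
  then obtain k where k: "\<forall>y. agree k y w0 \<longrightarrow> prep a (h y) = prep q y" by blast
  show ?thesis
  proof (intro exI[of _ "length q + k"] allI impI)
    fix x assume ax: "agree (length q + k) x (prep q w0)"
    have "has_prefix q x" using has_prefix_agree[OF has_prefix_prep ax] by simp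
    then have xq: "x = prep q (dropw (length q) x)" using prep_dropw by metis
    then have "agree k (dropw (length q) x) w0" using ax agree_prep_iff by metis
    then have "prep a (h (dropw (length q) x)) = x" using k xq by metis
    then show "fixp (u, g, v) x" using pq[of "dropw (length q) x"] xq by (simp add: fixp_def)
  qed
qed



lemma exists_other: "CARD('x::finite) \<ge> 2 \<Longrightarrow> \<exists>c::'x. c \<noteq> a"
proof (rule ccontr)
  assume "CARD('x) \<ge> 2" "\<not> (\<exists>c::'x. c \<noteq> a)"
  then have "(UNIV::'x set) = {a}" by auto
  then have "CARD('x) = 1" by (metis card.empty card_insert_if empty_iff finite.emptyI One_nat_def)
  then show False using \<open>CARD('x) \<ge> 2\<close> by simp
qed

lemma Of_empty:
  assumes ss: "self_similar_group G" and card: "CARD('x::finite) \<ge> 2" and g: "g \<in> G"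
    and uv: "u \<noteq> v"
  shows "intc (fixp (u, g, v)) = ({} :: 'x infword set)"
proof (rule ccontr)
  assume "intc (fixp (u, g, v)) \<noteq> {}"
  then obtain w n where n: "\<forall>x. agree n x w \<longrightarrow> fixp (u, g, v) x" by (auto simp: intc_def)
  then have "fixp (u, g, v) w" by simp
  then have hp: "has_prefix v w" by (auto simp: fixp_def pact_simp split: if_splits)
  define r where "r = dropw (length v) w"
  have wr: "w = prep v r" using prep_dropw[OF hp] by (simp add: r_def)
  have fy: "prep u (g y) = prep v y" if "agree n y r" for y
  proof -
    have "agree (length v + n) (prep v y) (prep v r)" using that agree_prep_iff by blast
    then have "agree n (prep v y) w" using wr agree_mono by fastforce
    then have "fixp (u, g, v) (prep v y)" using n by blast
    then show ?thesis by (simp add: fixp_def pact_simp)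
  qed
  obtain c where c: "c \<noteq> r n" using exists_other[OF card] by blast
  define y2 where "y2 = r(n := c)"
  have a1: "agree n r r" by simp
  have a2: "agree n y2 r" by (simp add: agree_def y2_def)
  have d: "y2 n \<noteq> r n" using c by (simp add: y2_def)
  have a12: "agree n y2 r" using a2 .
  consider (eq) "length u = length v" | (lt) "length u < length v" | (gt) "length v < length u" by linarith
  then show False
  proof cases
    case eq
    then show False using prep_eq_same[OF eq fy[OF a1]] uv by simp
  next
    case lt
    define s where "s = drop (length u) v"
    have gs: "g y = prep s y" if "agree n y r" for y
      using prep_eq_less[OF lt fy[OF that]] by (simp add: s_def)
    have injg: "inj g"
    proof -
      have "homeomorphic_map Xomega_top Xomega_top g" using ss g by (simp add: self_similar_group_def)
      then show ?thesis using homeomorphic_imp_injective_map by fastforce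
    qed
    have ig: "inv g \<in> G" using ss g by (simp add: self_similar_group_def)
    have ag: "agree (length s + n) (prep s y2) (prep s r)" using a2 agree_prep_iff by blast
    have "agree (length s + n) (inv g (prep s y2)) (inv g (prep s r))"
      using ss_agree[OF ss ig ag] .
    moreover have "inv g (prep s y2) = y2" "inv g (prep s r) = r"
      using gs[OF a2] gs[OF a1] inv_f_f[OF injg] by metis+
    moreover have "length s > 0" using lt by (simp add: s_def)
    ultimately show False using d by (auto simp: agree_def)
  next
    case gt
    define s where "s = drop (length v) u"
    have gs: "prep s (g y) = y" if "agree n y r" for y
      using prep_eq_less[OF gt fy[OF that, symmetric]] by (simp add: s_def)
    have "agree n (g y2) (g r)" using ss_agree[OF ss g a2] .
    then have "agree (length s + n) (prep s (g y2)) (prep s (g r))" using agree_prep_iff by blast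
    then have "agree (length s + n) y2 r" using gs[OF a2] gs[OF a1] by simp
    moreover have "length s > 0" using gt by (simp add: s_def)
    ultimately show False using d by (auto simp: agree_def)
  qed
qed



lemma prefix_set_eq: "{w. has_prefix (x # u) w \<and> dropw (length (x # u)) w \<in> A}
   = {w. w 0 = x \<and> dropw 1 w \<in> {w'. has_prefix u w' \<and> dropw (length u) w' \<in> A}}"
  by (auto simp: has_prefix_Cons dropw_dropw)

lemma P1:
  assumes A: "A \<in> sets (bernoulli_mu :: 'x::finite infword measure)"
  shows "{w. has_prefix u w \<and> dropw (length u) w \<in> A} \<in> sets bernoulli_mu \<and>
    emeasure bernoulli_mu {w. has_prefix u w \<and> dropw (length u) w \<in> A}
      = ennreal ((1 / real CARD('x)) ^ length u) * emeasure bernoulli_mu A"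
proof (induction u)
  case Nil
  then show ?case using A by (simp add: has_prefix_def)
next
  case (Cons x u)
  show ?case
    unfolding prefix_set_eq
    using cons_meas[OF Cons.IH[THEN conjunct1]] cons_emeasure[OF Cons.IH[THEN conjunct1]] Cons.IH
    by (simp add: ennreal_mult'[symmetric] mult.assoc[symmetric])
qed

lemma P2:
  assumes A: "A \<in> sets (bernoulli_mu :: 'x::finite infword measure)" and z: "emeasure bernoulli_mu A = 0"
  shows "emeasure bernoulli_mu {w. dropw n w \<in> A} = 0"
proof (induction n)
  case 0
  then show ?case using z by simp
next
  case (Suc n)
  have "{w. dropw (Suc n) w \<in> A} = {w. dropw 1 w \<in> {w'. dropw n w' \<in> A}}"
    by (auto simp: dropw_dropw)
  then show ?case using shift_emeasure[OF drop_meas_set[OF A, of n]] Suc by simp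
qed

lemma cyl_meas:
  assumes "\<forall>w\<in>S. \<exists>n. \<forall>x. agree n x w \<longrightarrow> x \<in> S"
  shows "S \<in> sets (bernoulli_mu :: 'x::finite infword measure)"
proof -
  define C where "C p = {w. has_prefix p w \<and> dropw (length p) w \<in> (UNIV :: 'x infword set)}" for p :: "'x list"
  have CS: "C p \<in> sets bernoulli_mu" for p
    using P1[of UNIV p] by (simp add: C_def sets.top[of bernoulli_mu, simplified])
  have "S = (\<Union>p\<in>{p. C p \<subseteq> S}. C p)"
  proof
    show "S \<subseteq> (\<Union>p\<in>{p. C p \<subseteq> S}. C p)"
    proof
      fix w assume "w \<in> S"
      then obtain n where n: "\<forall>x. agree n x w \<longrightarrow> x \<in> S" using assms by blast
      have "C (pre n w) \<subseteq> S" using n by (auto simp: C_def has_prefix_pre)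
      moreover have "w \<in> C (pre n w)" by (simp add: C_def has_prefix_pre)
      ultimately show "w \<in> (\<Union>p\<in>{p. C p \<subseteq> S}. C p)" by blast
    qed
  qed auto
  also have "\<dots> \<in> sets bernoulli_mu"
  proof (rule sets.countable_UN')
    show "countable {p :: 'x list. C p \<subseteq> S}" by (rule countable_subset[of _ UNIV]) simp_all
  qed (simp add: CS image_subset_iff)
  finally show ?thesis .
qed

lemma intc_open: "w \<in> intc P \<Longrightarrow> \<exists>n. \<forall>x. agree n x w \<longrightarrow> x \<in> intc P"
proof -
  assume "w \<in> intc P"
  then obtain n where n: "\<forall>x. agree n x w \<longrightarrow> P x" by (auto simp: intc_def)
  have "\<forall>x. agree n x w \<longrightarrow> (\<forall>y. agree n y x \<longrightarrow> P y)"
    using n agree_trans by blast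
  then show ?thesis unfolding intc_def by blast
qed

lemma intc_meas: "intc P \<in> sets (bernoulli_mu :: 'x::finite infword measure)"
  by (rule cyl_meas) (use intc_open in blast)

lemma intc_sub: "w \<in> intc P \<Longrightarrow> P w"
  unfolding intc_def by auto

lemma fix_meas:
  assumes ss: "self_similar_group G" and g: "g \<in> G"
  shows "{w. g w = w} \<in> sets (bernoulli_mu :: 'x::finite infword measure)"
proof -
  have "{w. g w \<noteq> w} \<in> sets (bernoulli_mu :: 'x::finite infword measure)"
  proof (rule cyl_meas, intro ballI)
    fix w assume "w \<in> {w. g w \<noteq> w}"
    then obtain i where i: "g w i \<noteq> w i" by (auto simp: fun_eq_iff)
    show "\<exists>n. \<forall>x. agree n x w \<longrightarrow> x \<in> {w. g w \<noteq> w}"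
    proof (intro exI[of _ "Suc i"] allI impI)
      fix x assume a: "agree (Suc i) x w"
      then have "agree (Suc i) (g x) (g w)" using ss_agree[OF ss g] by blast
      then show "x \<in> {w. g w \<noteq> w}" using a i by (auto simp: agree_def)
    qed
  qed
  then have "UNIV - {w. g w \<noteq> w} \<in> sets (bernoulli_mu :: 'x::finite infword measure)"
    using sets.compl_sets[of _ bernoulli_mu] by simp
  moreover have "UNIV - {w. g w \<noteq> w} = {w. g w = w}" by auto
  ultimately show ?thesis by simp
qed

definition Og :: "('x infword \<Rightarrow> 'x infword) \<Rightarrow> 'x infword set" where
  "Og g = intc (\<lambda>x. g x = x)"

lemma fixp_same: "fixp (u, g, u) x \<longleftrightarrow> has_prefix u x \<and> g (dropw (length u) x) = dropw (length u) x"
proof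
  assume a: "fixp (u, g, u) x"
  then have hp: "has_prefix u x" by (auto simp: fixp_def pact_simp split: if_splits)
  then have "prep u (g (dropw (length u) x)) = prep u (dropw (length u) x)"
    using a prep_dropw[OF hp] by (simp add: fixp_def pact_simp)
  then show "has_prefix u x \<and> g (dropw (length u) x) = dropw (length u) x"
    using prep_eq_same hp by blast
next
  assume "has_prefix u x \<and> g (dropw (length u) x) = dropw (length u) x"
  then show "fixp (u, g, u) x" using prep_dropw[of u x] by (simp add: fixp_def pact_simp)
qed

lemma Of_char: "intc (fixp (u, g, u)) = {w. has_prefix u w \<and> dropw (length u) w \<in> Og g}"
proof (intro set_eqI iffI)
  fix w assume "w \<in> intc (fixp (u, g, u))"
  then obtain n where n: "\<forall>x. agree n x w \<longrightarrow> fixp (u, g, u) x" by (auto simp: intc_def)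
  then have hp: "has_prefix u w" using fixp_same[of u g w] agree_refl by blast
  have "\<forall>y. agree n y (dropw (length u) w) \<longrightarrow> g y = y"
  proof (intro allI impI)
    fix y assume "agree n y (dropw (length u) w)"
    then have "agree (length u + n) (prep u y) w"
      using agree_prep_iff[of u n y] prep_dropw[OF hp] by metis
    then have "fixp (u, g, u) (prep u y)" using n agree_mono by fastforce
    then show "g y = y" using fixp_same[of u g "prep u y"] by simp
  qed
  then show "w \<in> {w. has_prefix u w \<and> dropw (length u) w \<in> Og g}"
    using hp by (auto simp: Og_def intc_def)
next
  fix w assume "w \<in> {w. has_prefix u w \<and> dropw (length u) w \<in> Og g}"
  then obtain n where hp: "has_prefix u w" and n: "\<forall>y. agree n y (dropw (length u) w) \<longrightarrow> g y = y"
    by (auto simp: Og_def intc_def)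
  have "\<forall>x. agree (length u + n) x w \<longrightarrow> fixp (u, g, u) x"
  proof (intro allI impI)
    fix x assume a: "agree (length u + n) x w"
    then have "has_prefix u x" using has_prefix_agree[OF hp] by simp
    moreover have "agree n (dropw (length u) x) (dropw (length u) w)"
      using agree_dropw[OF a, of "length u"] by simp
    ultimately show "fixp (u, g, u) x" using n fixp_same by blast
  qed
  then show "w \<in> intc (fixp (u, g, u))" by (auto simp: intc_def)
qed

lemma reg_AE:
  assumes ae: "AE w in bernoulli_mu. G_regular G w" and g: "g \<in> G"
  shows "AE w in (bernoulli_mu :: 'x::finite infword measure). g w = w \<longrightarrow> w \<in> Og g"
  using ae
proof (rule eventually_mono)
  fix w assume "G_regular G w"
  then have "f_regular ([], g, []) w" using g by (simp add: G_regular_def)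
  show "g w = w \<longrightarrow> w \<in> Og g"
  proof
    assume gw: "g w = w"
    have pw: "pact ([], g, []) v = Some (g v)" for v by (simp add: pact_simp has_prefix_def)
    obtain U where U: "openin Xomega_top U" "w \<in> U" "\<forall>v\<in>U. pact ([], g, []) v = Some v"
      using \<open>f_regular ([], g, []) w\<close> gw unfolding f_regular_def pw by auto
    obtain n where n: "\<forall>x. agree n x w \<longrightarrow> x \<in> U" using open_agree[OF U(1,2)] by blast
    have "\<forall>x. agree n x w \<longrightarrow> g x = x" using n U(3) pw by fastforce
    then show "w \<in> Og g" unfolding Og_def intc_def by blast
  qed
qed

lemma Og_null:
  assumes ss: "self_similar_group G" and ae: "AE w in bernoulli_mu. G_regular G w" and g: "g \<in> G"
  shows "emeasure (bernoulli_mu :: 'x::finite infword measure) ({w. g w = w} - Og g) = 0"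
proof -
  have "({w. g w = w} - Og g) \<in> sets (bernoulli_mu :: 'x::finite infword measure)"
    using fix_meas[OF ss g] intc_meas[of "\<lambda>x. g x = x"] by (auto simp: Og_def)
  moreover have "{x \<in> space bernoulli_mu. \<not> (g x = x \<longrightarrow> x \<in> Og g)} = {w. g w = w} - Og g" by auto
  ultimately have "(AE x in (bernoulli_mu :: 'x::finite infword measure). g x = x \<longrightarrow> x \<in> Og g)
     \<longleftrightarrow> emeasure (bernoulli_mu :: 'x::finite infword measure) ({w. g w = w} - Og g) = 0"
    by (rule AE_iff_measurable)
  then show ?thesis using reg_AE[OF ae g] by simp
qed



abbreviation Of :: "'x gen \<Rightarrow> 'x infword set" where "Of f \<equiv> intc (fixp f)"

lemma psi_gen_eq:
  assumes ss: "self_similar_group G" and card: "CARD('x::finite) \<ge> 2"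
    and ae: "AE w in bernoulli_mu. G_regular G w" and g: "g \<in> G"
  shows "psi_gen (u, g, v) = complex_of_real (measure (bernoulli_mu :: 'x infword measure) (Of (u, g, v)))"
proof (cases "u = v")
  case False
  then show ?thesis using Of_empty[OF ss card g False] by (simp add: psi_gen_def)
next
  case True
  let ?M = "bernoulli_mu :: 'x infword measure"
  have fin: "finite_measure ?M" using prob_mu prob_space.finite_measure by blast
  have mO: "Og g \<in> sets ?M" by (simp add: Og_def intc_meas)
  have mF: "{w. g w = w} \<in> sets ?M" using fix_meas[OF ss g] .
  have sub: "Og g \<subseteq> {w. g w = w}" by (auto simp: Og_def intc_def)
  have "measure ?M ({w. g w = w} - Og g) = 0" using Og_null[OF ss ae g] by (simp add: measure_def)
  then have eqm: "measure ?M (Og g) = measure ?M {w. g w = w}"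
    using finite_measure.finite_measure_Diff[OF fin mF mO sub] by simp
  have "measure ?M (Of (u, g, u)) = (1 / real CARD('x)) ^ length u * measure ?M (Og g)"
    unfolding Of_char measure_def using P1[OF mO, of u]
    by (simp add: enn2real_mult)
  moreover have "real CARD('x) powi (- int (length u)) = (1 / real CARD('x)) ^ length u"
    by (simp add: power_int_def power_one_over inverse_eq_divide)
  ultimately show ?thesis using True eqm by (simp add: psi_gen_def)
qed

lemma bdry:
  assumes ss: "self_similar_group G" and card: "CARD('x::finite) \<ge> 2"
    and ae: "AE w in bernoulli_mu. G_regular G w" and g: "g \<in> G"
  shows "AE w in (bernoulli_mu :: 'x infword measure).
     \<exists>n. \<forall>x. agree n x w \<longrightarrow> (x \<in> Of (u, g, v) \<longleftrightarrow> w \<in> Of (u, g, v))"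
proof (cases "u = v")
  case False
  then show ?thesis using Of_empty[OF ss card g False] by simp
next
  case True
  let ?M = "bernoulli_mu :: 'x infword measure"
  let ?N = "{w. dropw (length u) w \<in> ({w. g w = w} - Og g)}"
  have mD: "({w. g w = w} - Og g) \<in> sets ?M"
    using fix_meas[OF ss g] intc_meas[of "\<lambda>x. g x = x"] by (auto simp: Og_def)
  have "?N \<in> null_sets ?M"
    using P2[OF mD Og_null[OF ss ae g], of "length u"] drop_meas_set[OF mD, of "length u"] by (simp add: null_sets_def)
  then have "AE w in ?M. w \<notin> ?N" by (rule AE_not_in)
  then show ?thesis
  proof (rule eventually_mono)
    fix w assume wN: "w \<notin> ?N"
    show "\<exists>n. \<forall>x. agree n x w \<longrightarrow> (x \<in> Of (u, g, v) \<longleftrightarrow> w \<in> Of (u, g, v))"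
    proof (cases "w \<in> Of (u, g, v)")
      case True
      then show ?thesis using intc_open by blast
    next
      case notin: False
      let ?d = "dropw (length u) w"
      have OfC: "x \<in> Of (u, g, v) \<Longrightarrow> has_prefix u x \<and> g (dropw (length u) x) = dropw (length u) x" for x
        using intc_sub fixp_same True by metis
      show ?thesis
      proof (cases "has_prefix u w")
        case False
        show ?thesis
        proof (intro exI[of _ "length u"] allI impI)
          fix x assume a: "agree (length u) x w"
          have "x \<notin> Of (u, g, v)"
          proof
            assume "x \<in> Of (u, g, v)"
            then have "has_prefix u x" using OfC by blast
            then have "has_prefix u w" using has_prefix_agree[OF _ agree_sym[OF a]] by simp
            then show False using False by simp
          qed
          then show "x \<in> Of (u, g, v) \<longleftrightarrow> w \<in> Of (u, g, v)" using notin by simp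
        qed
      next
        case hp: True
        show ?thesis
        proof (cases "g ?d = ?d")
          case True
          then have "?d \<in> Og g" using wN by auto
          then have "w \<in> Of (u, g, v)" using Of_char[of u g] hp \<open>u = v\<close> by auto
          then show ?thesis using notin by simp
        next
          case False
          then obtain i where i: "g ?d i \<noteq> ?d i" by (auto simp: fun_eq_iff)
          show ?thesis
          proof (intro exI[of _ "length u + Suc i"] allI impI)
            fix x assume a: "agree (length u + Suc i) x w"
            have "x \<notin> Of (u, g, v)"
            proof
              assume "x \<in> Of (u, g, v)"
              then have fx: "g (dropw (length u) x) = dropw (length u) x" using OfC by blast
              have ad: "agree (Suc i) (dropw (length u) x) ?d" using agree_dropw[OF a, of "length u"] by simp
              then have "agree (Suc i) (g (dropw (length u) x)) (g ?d)" using ss_agree[OF ss g] by blast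
              then show False using ad fx i by (auto simp: agree_def)
            qed
            then show "x \<in> Of (u, g, v) \<longleftrightarrow> w \<in> Of (u, g, v)" using notin by simp
          qed
        qed
      qed
    qed
  qed
qed



definition Fsum :: "(complex \<times> 'x gen) list \<Rightarrow> 'x infword \<Rightarrow> complex" where
  "Fsum eta w = (\<Sum>(c, f)\<leftarrow>eta. c * complex_of_real (indicator (Of f) w))"

lemma Fsum_int:
  "integrable (bernoulli_mu :: 'x::finite infword measure) (Fsum eta) \<and>
   integral\<^sup>L bernoulli_mu (Fsum eta) = (\<Sum>(c, f)\<leftarrow>eta. c * complex_of_real (measure bernoulli_mu (Of f)))"
proof (induction eta)
  case Nil
  then show ?case by (simp add: Fsum_def)
next
  case (Cons cf eta)
  obtain c f where cf: "cf = (c, f)" by (cases cf)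
  have fe: "emeasure (bernoulli_mu :: 'x infword measure) (Of f) < \<infinity>"
    using finite_measure.emeasure_finite[OF prob_space.finite_measure[OF prob_mu]] by (simp add: top.not_eq_extremum)
  have i1: "integrable (bernoulli_mu :: 'x infword measure) (\<lambda>w. c * complex_of_real (indicator (Of f) w))"
    using fe intc_meas by (intro integrable_mult_right integrable_of_real integrable_real_indicator) auto
  have eq: "Fsum (cf # eta) = (\<lambda>w. c * complex_of_real (indicator (Of f) w) + Fsum eta w)"
    by (simp add: Fsum_def cf fun_eq_iff)
  show ?case
    unfolding eq using i1 Cons intc_meas
    by (simp add: cf integral_add)
qed

lemma pi_rep_append: "pi_rep G w (e1 @ e2) w1 w2 = pi_rep G w e1 w1 w2 + pi_rep G w e2 w1 w2"
  by (simp add: pi_rep_def)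

definition scl :: "complex \<Rightarrow> (complex \<times> 'x gen) list \<Rightarrow> (complex \<times> 'x gen) list" where
  "scl a e = map (\<lambda>(c, f). (a * c, f)) e"

lemma pi_rep_scl: "pi_rep G w (scl a e) w1 w2 = a * pi_rep G w e w1 w2"
  unfolding pi_rep_def scl_def by (induction e) (auto simp: algebra_simps)

lemma psi_append: "psi (e1 @ e2) = psi e1 + psi e2" by (simp add: psi_def)
lemma psi_scl: "psi (scl a e) = a * psi e"
  unfolding psi_def scl_def by (induction e) (auto simp: algebra_simps)

lemma CGX_append: "e1 \<in> CGX G \<Longrightarrow> e2 \<in> CGX G \<Longrightarrow> e1 @ e2 \<in> CGX G"
  by (auto simp: CGX_def)
lemma CGX_scl: "e \<in> CGX G \<Longrightarrow> scl a e \<in> CGX G"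
  by (auto simp: CGX_def scl_def)

lemma finite_bound:
  fixes R :: "'a \<Rightarrow> nat \<Rightarrow> bool"
  assumes "finite S" "\<forall>s\<in>S. \<exists>n. R s n" "\<And>s n m. R s n \<Longrightarrow> n \<le> m \<Longrightarrow> R s m"
  shows "\<exists>n. \<forall>s\<in>S. R s n"
proof -
  obtain N where N: "\<forall>s\<in>S. R s (N s)" using bchoice[OF assms(2)] by blast
  define k where "k = Max (N ` S)"
  have k: "s \<in> S \<Longrightarrow> N s \<le> k" for s unfolding k_def using assms(1) by (intro Max_ge) auto
  have "\<forall>s\<in>S. R s k"
  proof
    fix s assume s: "s \<in> S"
    then have "N s \<le> k" by (rule k)
    then show "R s k" using N s assms(3) by blast
  qed
  then show ?thesis by blast
qed

lemma sum_cong_list: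
  "(\<And>c f. (c, f) \<in> set eta \<Longrightarrow> P c f = Q c f) \<Longrightarrow>
   (\<Sum>(c, f)\<leftarrow>eta. P c f) = (\<Sum>(c, f)\<leftarrow>eta. Q c f)"
  by (induction eta) auto

definition Rr :: "'x infword \<Rightarrow> complex \<times> 'x gen \<Rightarrow> nat \<Rightarrow> bool" where
  "Rr w cf n \<longleftrightarrow> length (snd (snd (snd cf))) \<le> n \<and>
     (\<forall>x. agree n x w \<longrightarrow> (x \<in> Of (snd cf) \<longleftrightarrow> w \<in> Of (snd cf)))"

lemma Rr_mono: "Rr w cf n \<Longrightarrow> n \<le> m \<Longrightarrow> Rr w cf m"
proof -
  assume r: "Rr w cf n" and nm: "n \<le> m"
  have am: "agree m x w \<Longrightarrow> agree n x w" for x by (rule agree_mono[OF _ nm])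
  show "Rr w cf m" unfolding Rr_def
  proof (intro conjI allI impI)
    show "length (snd (snd (snd cf))) \<le> m" using r nm unfolding Rr_def by simp
  next
    fix x assume "agree m x w"
    then have "agree n x w" by (rule am)
    then show "(x \<in> Of (snd cf)) = (w \<in> Of (snd cf))" using r unfolding Rr_def by blast
  qed
qed

lemma part1:
  assumes card: "CARD('x::finite) \<ge> 2" and ss: "self_similar_group G"
    and ae: "AE w in bernoulli_mu. G_regular G w" and sreg: "strictly_G_regular G (w0 :: 'x infword)"
    and eta: "eta \<in> CGX G" and pz: "pi_rep G w0 eta = (\<lambda>_ _. 0)"
  shows "psi eta = 0"
proof -
  let ?M = "bernoulli_mu :: 'x infword measure"
  have inG: "(c, (u, g, v)) \<in> set eta \<Longrightarrow> g \<in> G" for c u g v using eta by (auto simp: CGX_def)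
  have "psi eta = (\<Sum>(c, f)\<leftarrow>eta. c * complex_of_real (measure ?M (Of f)))"
    unfolding psi_def
  proof (rule sum_cong_list)
    fix c f assume "(c, f) \<in> set eta"
    then show "c * psi_gen f = c * complex_of_real (measure ?M (Of f))"
      using psi_gen_eq[OF ss card ae] inG by (cases f) auto
  qed
  also have "\<dots> = integral\<^sup>L ?M (Fsum eta)" using Fsum_int by metis
  also have "\<dots> = 0"
  proof (rule integral_eq_zero_AE)
    let ?R = "Rr :: 'x infword \<Rightarrow> complex \<times> 'x gen \<Rightarrow> nat \<Rightarrow> bool"
    note R_def = Rr_def
    have Rmono: "Rr w cf n \<Longrightarrow> n \<le> m \<Longrightarrow> Rr w cf m" for w cf n m by (rule Rr_mono)
    have "AE w in ?M. \<forall>cf\<in>set eta. \<exists>n. Rr w cf n"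
    proof (rule AE_finite_allI)
      fix cf assume cf: "cf \<in> set eta"
      obtain c u g v where cfe: "cf = (c, (u, g, v))" by (cases cf) auto
      have "g \<in> G" using cf cfe inG by blast
      from bdry[OF ss card ae this, of u v]
      show "AE w in ?M. \<exists>n. Rr w cf n"
      proof (rule eventually_mono)
        fix w assume "\<exists>n. \<forall>x. agree n x w \<longrightarrow> (x \<in> Of (u, g, v)) = (w \<in> Of (u, g, v))"
        then obtain n where hn: "\<forall>x. agree n x w \<longrightarrow> (x \<in> Of (u, g, v)) = (w \<in> Of (u, g, v))"
          by (rule exE)
        have "\<forall>x. agree (n + length v) x w \<longrightarrow> (x \<in> Of (u, g, v)) = (w \<in> Of (u, g, v))"
        proof (intro allI impI)
          fix x assume "agree (n + length v) x w"
          then have "agree n x w" by (rule agree_mono) simp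
          then show "(x \<in> Of (u, g, v)) = (w \<in> Of (u, g, v))" using hn by blast
        qed
        then have hh: "\<forall>x. agree (n + length v) x w \<longrightarrow> (x \<in> Of (u, g, v)) = (w \<in> Of (u, g, v))" .
        have "Rr w cf (n + length v)" unfolding R_def cfe snd_conv
        proof (intro conjI)
          show "length v \<le> n + length v" by simp
        qed (rule hh)
        then show "\<exists>n. Rr w cf n" by (rule exI)
      qed
    qed simp
    then show "AE w in ?M. Fsum eta w = 0"
    proof (rule eventually_mono)
      fix w assume "\<forall>cf\<in>set eta. \<exists>n. Rr w cf n"
      then obtain n where n: "\<forall>cf\<in>set eta. Rr w cf n"
        using finite_bound[of "set eta" "Rr w"] Rmono by blast
      define w1 where "w1 = prep (pre n w) w0"
      have aw: "agree n w1 w"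
        using agree_prep[of "pre n w" w0 "dropw n w"] prep_pre[of n w] by (simp add: w1_def)
      have idG: "id \<in> G" using ss by (simp add: self_similar_group_def)
      have orb: "w1 \<in> orbit G w0"
        unfolding orbit_def using idG
        by (intro CollectI bexI[of _ "(pre n w, id, [])"]) (auto simp: pact_simp has_prefix_def w1_def)
      have key: "(if pact f w1 = Some w1 then c else 0) = c * complex_of_real (indicator (Of f) w)"
        if cf: "(c, f) \<in> set eta" for c f
      proof -
        obtain u g v where fe: "f = (u, g, v)" by (cases f)
        have g: "g \<in> G" using cf fe inG by blast
        have "Rr w (c, f) n" using n cf by blast
        then have Rn: "length v \<le> n" "\<forall>x. agree n x w \<longrightarrow> (x \<in> Of f \<longleftrightarrow> w \<in> Of f)"
          unfolding R_def fe snd_conv by blast+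
        have "fixp f w1 \<longleftrightarrow> w1 \<in> Of f"
        proof
          assume "fixp f w1"
          then have "\<exists>K. \<forall>x. agree K x w1 \<longrightarrow> fixp f x"
            using transfer[OF ss sreg g, of v "pre n w" u] Rn(1) fe by (simp add: w1_def)
          then show "w1 \<in> Of f" by (simp add: intc_def)
        next
          assume "w1 \<in> Of f"
          then show "fixp f w1" by (rule intc_sub)
        qed
        then have "fixp f w1 \<longleftrightarrow> w \<in> Of f" using Rn(2) aw by blast
        then show ?thesis by (simp add: fixp_def indicator_def)
      qed
      have "0 = pi_rep G w0 eta w1 w1" using pz by metis
      also have "\<dots> = (\<Sum>(c, f)\<leftarrow>eta. if pact f w1 = Some w1 then c else 0)"
        using orb by (simp add: pi_rep_def)
      also have "\<dots> = Fsum eta w" unfolding Fsum_def by (rule sum_cong_list) (use key in blast)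
      finally show "Fsum eta w = 0" by simp
    qed
  qed
  finally show ?thesis .
qed

theorem mainTheorem6:
  fixes G :: "(('x::finite) infword \<Rightarrow> 'x infword) set" and w0 :: "'x infword"
  assumes "CARD('x) \<ge> 2"
    and "self_similar_group G"
    and "countable G"
    and "AE w in bernoulli_mu. G_regular G w"
    and "strictly_G_regular G w0"
  shows "(\<forall>eta\<in>CGX G. pi_rep G w0 eta = (\<lambda>_ _. 0) \<longrightarrow> psi eta = 0) \<and>
         (\<exists>psi'. (\<forall>eta\<in>CGX G. psi' (pi_rep G w0 eta) = psi eta) \<and>
            (\<forall>eta1\<in>CGX G. \<forall>eta2\<in>CGX G. \<forall>a b.
               psi' (\<lambda>w1 w2. a * pi_rep G w0 eta1 w1 w2 + b * pi_rep G w0 eta2 w1 w2)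
                 = a * psi' (pi_rep G w0 eta1) + b * psi' (pi_rep G w0 eta2)))"
proof -
  have P1: "\<forall>eta\<in>CGX G. pi_rep G w0 eta = (\<lambda>_ _. 0) \<longrightarrow> psi eta = 0"
    using part1[OF assms(1,2,4,5)] by blast
  have wd: "psi e1 = psi e2" if "e1 \<in> CGX G" "e2 \<in> CGX G" "pi_rep G w0 e1 = pi_rep G w0 e2" for e1 e2
  proof -
    let ?e = "e1 @ scl (-1) e2"
    have "?e \<in> CGX G" using that by (simp add: CGX_append CGX_scl)
    moreover have "pi_rep G w0 ?e = (\<lambda>_ _. 0)"
      using that(3) by (simp add: fun_eq_iff pi_rep_append pi_rep_scl)
    ultimately have "psi ?e = 0" using P1 by blast
    then show ?thesis by (simp add: psi_append psi_scl)
  qed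
  define psi' where "psi' P = psi (SOME e. e \<in> CGX G \<and> pi_rep G w0 e = P)" for P
  have ps: "psi' (pi_rep G w0 e) = psi e" if "e \<in> CGX G" for e
  proof -
    have "\<exists>e'. e' \<in> CGX G \<and> pi_rep G w0 e' = pi_rep G w0 e" using that by blast
    then have "(SOME e'. e' \<in> CGX G \<and> pi_rep G w0 e' = pi_rep G w0 e) \<in> CGX G \<and>
       pi_rep G w0 (SOME e'. e' \<in> CGX G \<and> pi_rep G w0 e' = pi_rep G w0 e) = pi_rep G w0 e"
      by (rule someI_ex)
    then show ?thesis unfolding psi'_def using wd that by blast
  qed
  have lin: "psi' (\<lambda>w1 w2. a * pi_rep G w0 eta1 w1 w2 + b * pi_rep G w0 eta2 w1 w2)
                 = a * psi' (pi_rep G w0 eta1) + b * psi' (pi_rep G w0 eta2)"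
    if "eta1 \<in> CGX G" "eta2 \<in> CGX G" for eta1 eta2 a b
  proof -
    have "(\<lambda>w1 w2. a * pi_rep G w0 eta1 w1 w2 + b * pi_rep G w0 eta2 w1 w2)
          = pi_rep G w0 (scl a eta1 @ scl b eta2)"
      by (simp add: fun_eq_iff pi_rep_append pi_rep_scl)
    then show ?thesis
      using ps[of "scl a eta1 @ scl b eta2"] ps that
      by (simp add: CGX_append CGX_scl psi_append psi_scl)
  qed
  show ?thesis using P1 ps lin by blast
qed

end
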